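(* Let $b\ge1$, $1\le a\le b$ be integers. Let $V:\mathbb{C}^2\to\mathcal{H}_j$ be the encoding isometry of a spin code that is $(\mathsf{BD}_{2b},\delta_a)$-covariant ($D^j(g)V=V\delta_a(g)$ for all $g\in\mathsf{BD}_{2b}$), and suppose the codewords $|\bar0\rangle=V|0\rangle$, $|\bar1\rangle=V|1\rangle$ are real (have real coefficients in the basis $|j,m\rangle$). Then for every $d\ge1$, the code satisfies the spin Knill–Laflamme conditions for all spherical tensors $T^k_q$ with $0\le k<d$ if and only if: (i) $\langle\bar0|T^k_q|\bar0\rangle=\langle\bar1|T^k_q|\bar1\rangle$ for all odd $k<d$ and all $0\le q\le k$ with $q\equiv0\pmod{2b}$; and (ii) $\langle\bar0|T^k_q|\bar1\rangle=0$ for all odd $k<d$ and all $-k\le q\le k$ with $q\equiv 2a-1\pmod{2b}$.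
   Context: $\mathcal{H}_j$ is the spin-$j$ irrep of $\mathrm{SU}(2)$ with orthonormal $J_z$-eigenbasis $|j,m\rangle$, $|m|\le j$, and $D^j(g)$ the action of $g$. Spherical tensors: $T^k_q=\sqrt{\tfrac{2k+1}{2j+1}}\sum_m C^{j\,m+q}_{k\,q,\,j\,m}|j,m+q\rangle\langle j,m|$, $0\le k\le 2j$, $-k\le q\le k$. The spin Knill–Laflamme conditions for $T^k_q$: $\langle\bar u|T^k_q|\bar v\rangle=c_{k,q}\delta_{uv}$ for $u,v\in\{0,1\}$ with $c_{k,q}$ independent of $u,v$. Notation: $\mathsf{X}=\begin{pmatrix}0&-i\\-i&0\end{pmatrix}$, $\mathsf{Z}=\mathrm{diag}(-i,i)$, $\mathsf{Ph}(\alpha)=\mathrm{diag}(e^{-i\alpha/2},e^{i\alpha/2})$, $\mathsf{BD}_{2b}=\langle\mathsf{X},\mathsf{Z},\mathsf{Ph}(\pi/b)\rangle$; $\delta_a$ ($1\le a\le b$) is the two-dimensional irrep of $\mathsf{BD}_{2b}$ with $\delta_a(\mathsf{X})=\mathsf{X}$, $\delta_a(\mathsf{Ph}(\pi/b))=\mathsf{Ph}(\pi/b)^{2a-1}$. *)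

theory Defs
  imports "HOL-Analysis.Analysis" "Jordan_Normal_Form.Matrix"
begin

(* Throughout, n = 2j (j the spin).  The Hilbert space H_j = C^(n+1); the basis
   vector with index r (0 <= r <= n) is |j, m> with m = r - j. *)

definition cinner :: "complex vec \<Rightarrow> complex vec \<Rightarrow> complex" where
  "cinner u v = (\<Sum>i<dim_vec u. cnj (u $ i) * v $ i)"

definition braket :: "complex vec \<Rightarrow> complex mat \<Rightarrow> complex vec \<Rightarrow> complex" where
  "braket u A v = cinner u (A *\<^sub>v v)"

(* Clebsch-Gordan coefficient C^{J M}_{j1 m1, j2 m2} = <j1 m1; j2 m2 | J M>
   (Condon-Shortley convention), via Racah's explicit formula.
   All arguments are DOUBLED (2 j1, 2 m1, 2 j2, 2 m2, 2 J, 2 M). *)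
definition cg_valid :: "int \<Rightarrow> int \<Rightarrow> int \<Rightarrow> int \<Rightarrow> int \<Rightarrow> int \<Rightarrow> bool" where
  "cg_valid j1 m1 j2 m2 J M \<longleftrightarrow>
     0 \<le> j1 \<and> 0 \<le> j2 \<and> 0 \<le> J \<and> M = m1 + m2 \<and>
     \<bar>m1\<bar> \<le> j1 \<and> \<bar>m2\<bar> \<le> j2 \<and> \<bar>M\<bar> \<le> J \<and>
     even (j1 + m1) \<and> even (j2 + m2) \<and> even (J + M) \<and>
     \<bar>j1 - j2\<bar> \<le> J \<and> J \<le> j1 + j2 \<and> even (j1 + j2 + J)"

definition ifact :: "int \<Rightarrow> real" where
  "ifact x = fact (nat x)"

definition clebsch_gordan :: "int \<Rightarrow> int \<Rightarrow> int \<Rightarrow> int \<Rightarrow> int \<Rightarrow> int \<Rightarrow> real" where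
  "clebsch_gordan j1 m1 j2 m2 J M =
     (if cg_valid j1 m1 j2 m2 J M then
        (let h = (\<lambda>x::int. x div 2) in
         sqrt (real_of_int (J + 1) * ifact (h (J + j1 - j2)) * ifact (h (J - j1 + j2))
                 * ifact (h (j1 + j2 - J)) / ifact (h (j1 + j2 + J) + 1))
       * sqrt (ifact (h (J + M)) * ifact (h (J - M)) * ifact (h (j1 - m1)) * ifact (h (j1 + m1))
                 * ifact (h (j2 - m2)) * ifact (h (j2 + m2)))
       * (\<Sum>s\<in>{0..nat (h (j1 + j2 - J))}.
            let t = int s;
                args = [t, h (j1 + j2 - J) - t, h (j1 - m1) - t, h (j2 + m2) - t,
                        h (J - j2 + m1) + t, h (J - j1 - m2) + t]
            in if (\<forall>x\<in>set args. 0 \<le> x)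
               then (-1) ^ s / (\<Prod>x\<leftarrow>args. ifact x) else 0))
      else 0)"

(* Spherical tensor T^k_q on H_j (n = 2j):
   T^k_q = sqrt((2k+1)/(2j+1)) sum_m C^{j m+q}_{k q, j m} |j,m+q><j,m| *)
definition spherical_tensor :: "nat \<Rightarrow> nat \<Rightarrow> int \<Rightarrow> complex mat" where
  "spherical_tensor n k q = mat (n + 1) (n + 1) (\<lambda>(r, c).
     complex_of_real (sqrt ((2 * real k + 1) / (real n + 1))
       * clebsch_gordan (2 * int k) (2 * q) (int n) (2 * int c - int n)
                        (int n) (2 * int r - int n)))"

(* The spin-j representation D^j of SU(2) (n = 2j), realised on the symmetric power
   Sym^n(C^2) with orthonormal basis x^r y^(n-r)/sqrt(r!(n-r)!) = |j, r - j>, where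
   x = |1/2,1/2> = e_0 and y = |1/2,-1/2> = e_1 of C^2, and g acts by
   x |-> g11 x + g21 y, y |-> g12 x + g22 y. *)
definition spin_rep :: "nat \<Rightarrow> complex mat \<Rightarrow> complex mat" where
  "spin_rep n g = mat (n + 1) (n + 1) (\<lambda>(r, c).
     complex_of_real (sqrt (fact r * fact (n - r) / (fact c * fact (n - c))))
     * (\<Sum>a\<in>{0..c}. if a \<le> r \<and> r - a \<le> n - c then
          of_nat (c choose a) * of_nat ((n - c) choose (r - a))
          * (g $$ (0,0)) ^ a * (g $$ (1,0)) ^ (c - a)
          * (g $$ (0,1)) ^ (r - a) * (g $$ (1,1)) ^ (n - c - (r - a))
        else 0))"

definition mat2 :: "complex \<Rightarrow> complex \<Rightarrow> complex \<Rightarrow> complex \<Rightarrow> complex mat" where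
  "mat2 a b c d = mat 2 2 (\<lambda>(r, s). if r = 0 then (if s = 0 then a else b)
                                           else (if s = 0 then c else d))"

definition matX :: "complex mat" where "matX = mat2 0 (- \<i>) (- \<i>) 0"
definition matZ :: "complex mat" where "matZ = mat2 (- \<i>) 0 0 \<i>"
definition matPh :: "real \<Rightarrow> complex mat" where
  "matPh \<alpha> = mat2 (cis (- \<alpha> / 2)) 0 0 (cis (\<alpha> / 2))"

(* Graph {(g, delta_a(g)) | g in BD_2b} of the two-dimensional irrep delta_a of
   BD_2b = <X, Z, Ph(pi/b)>: the subgroup of SU(2) x SU(2) generated by the pairs
   (X, X), (Ph(pi/b), Ph(pi/b)^(2a-1)), and (Z, Z^(2a-1)) (note Z = Ph(pi/b)^b). *)
inductive_set bd_graph :: "nat \<Rightarrow> nat \<Rightarrow> (complex mat \<times> complex mat) set"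
  for b a :: nat where
  one: "(1\<^sub>m 2, 1\<^sub>m 2) \<in> bd_graph b a"
| genX: "(matX, matX) \<in> bd_graph b a"
| genZ: "(matZ, matZ ^\<^sub>m (2 * a - 1)) \<in> bd_graph b a"
| genPh: "(matPh (pi / b), matPh (pi / b) ^\<^sub>m (2 * a - 1)) \<in> bd_graph b a"
| mult: "(g, h) \<in> bd_graph b a \<Longrightarrow> (g', h') \<in> bd_graph b a
          \<Longrightarrow> (g * g', h * h') \<in> bd_graph b a"

definition spin_KL :: "nat \<Rightarrow> complex mat \<Rightarrow> nat \<Rightarrow> int \<Rightarrow> bool" where
  "spin_KL n V k q \<longleftrightarrow> (\<exists>c. \<forall>u<2. \<forall>v<2.
     braket (col V u) (spherical_tensor n k q) (col V v) = (if u = v then c else 0))"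

end

theory Submission
  imports Defs
begin


definition rfun :: "int \<Rightarrow> int list \<Rightarrow> real" where
  "rfun t xs = (if (\<forall>x\<in>set xs. 0 \<le> x) then (-1) ^ nat t / (\<Prod>x\<leftarrow>xs. ifact x) else 0)"

definition rt :: "int \<Rightarrow> int \<Rightarrow> int \<Rightarrow> int \<Rightarrow> int \<Rightarrow> int \<Rightarrow> real" where
  "rt j1 m1 j2 m2 J t = rfun t [t, (j1 + j2 - J) div 2 - t, (j1 - m1) div 2 - t, (j2 + m2) div 2 - t,
                        (J - j2 + m1) div 2 + t, (J - j1 - m2) div 2 + t]"

definition pre1 :: "int \<Rightarrow> int \<Rightarrow> int \<Rightarrow> real" where
  "pre1 j1 j2 J = sqrt (real_of_int (J + 1) * ifact ((J + j1 - j2) div 2) * ifact ((J - j1 + j2) div 2)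
                 * ifact ((j1 + j2 - J) div 2) / ifact ((j1 + j2 + J) div 2 + 1))"

definition pre2 :: "int \<Rightarrow> int \<Rightarrow> int \<Rightarrow> int \<Rightarrow> int \<Rightarrow> int \<Rightarrow> real" where
  "pre2 j1 m1 j2 m2 J M = sqrt (ifact ((J + M) div 2) * ifact ((J - M) div 2) * ifact ((j1 - m1) div 2) * ifact ((j1 + m1) div 2)
                 * ifact ((j2 - m2) div 2) * ifact ((j2 + m2) div 2))"

lemma cg_alt:
  assumes "cg_valid j1 m1 j2 m2 J M"
  shows "clebsch_gordan j1 m1 j2 m2 J M = pre1 j1 j2 J * pre2 j1 m1 j2 m2 J M *
     (\<Sum>t\<in>{0..(j1 + j2 - J) div 2}. rt j1 m1 j2 m2 J t)"
proof -
  let ?z = "(j1 + j2 - J) div 2"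
  have z: "0 \<le> ?z" using assms unfolding cg_valid_def by auto
  have "(\<Sum>s\<in>{0..nat ?z}. let t = int s;
                args = [t, ?z - t, (j1 - m1) div 2 - t, (j2 + m2) div 2 - t,
                        (J - j2 + m1) div 2 + t, (J - j1 - m2) div 2 + t]
            in if (\<forall>x\<in>set args. 0 \<le> x)
               then (-1) ^ s / (\<Prod>x\<leftarrow>args. ifact x) else 0)
      = (\<Sum>s\<in>{0..nat ?z}. rt j1 m1 j2 m2 J (int s))"
    by (rule sum.cong) (simp_all add: rt_def rfun_def Let_def)
  also have "\<dots> = (\<Sum>t\<in>int ` {0..nat ?z}. rt j1 m1 j2 m2 J t)"
    by (simp add: sum.reindex)
  also have "int ` {0..nat ?z} = {0..?z}" using z by (simp add: image_int_atLeastAtMost)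
  finally show ?thesis using assms unfolding clebsch_gordan_def pre1_def pre2_def
    by (simp add: Let_def)
qed

lemma cg_zero: "\<not> cg_valid j1 m1 j2 m2 J M \<Longrightarrow> clebsch_gordan j1 m1 j2 m2 J M = 0"
  by (simp add: clebsch_gordan_def)

lemma rfun_sign:
  assumes "t \<in> set xs" "t' \<in> set xs"
  shows "rfun t xs = (if even (t - t') then 1 else -1) * rfun t' xs"
proof (cases "\<forall>x\<in>set xs. 0 \<le> x")
  case True
  then have "0 \<le> t" "0 \<le> t'" using assms by auto
  then have "(-1::real) ^ nat t = (if even (t - t') then 1 else -1) * (-1) ^ nat t'"
    by (auto simp: minus_one_power_iff even_nat_iff)
  then show ?thesis using True by (simp add: rfun_def)
next
  case False
  then show ?thesis by (simp only: rfun_def if_not_P[OF False]) simp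
qed

lemma rfun_perm: "mset xs = mset ys \<Longrightarrow> rfun t xs = rfun t ys"
proof -
  assume h: "mset xs = mset ys"
  have "set xs = set ys" using h by (metis set_mset_mset)
  moreover have "prod_list (map ifact xs) = prod_list (map ifact ys)"
    by (metis h mset_map prod_mset_prod_list)
  ultimately show ?thesis by (simp add: rfun_def)
qed

lemma rt_flip:
  assumes "even (j1 + j2 - J)"
  shows "rt j1 (-m1) j2 (-m2) J t = (if even ((j1+j2-J) div 2) then 1 else -1) * rt j1 m1 j2 m2 J ((j1+j2-J) div 2 - t)"
proof -
  define z where "z = (j1+j2-J) div 2"
  define xs where "xs = [z - t, z - (z - t), (j1 - m1) div 2 - (z - t), (j2 + m2) div 2 - (z - t),
                        (J - j2 + m1) div 2 + (z - t), (J - j1 - m2) div 2 + (z - t)]"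
  have rx: "rt j1 m1 j2 m2 J (z - t) = rfun (z-t) xs" by (simp only: rt_def xs_def z_def)
  have ys: "rt j1 (-m1) j2 (-m2) J t = rfun t [z - (z - t), z - t, (J - j2 + m1) div 2 + (z - t), (J - j1 - m2) div 2 + (z - t), (j1 - m1) div 2 - (z - t), (j2 + m2) div 2 - (z - t)]"
    unfolding rt_def
    apply (rule arg_cong[where f="rfun t"])
    apply (simp only: list.inject)
    apply (intro conjI)
    using assms unfolding z_def by presburger+
  have ms: "mset [z - (z - t), z - t, (J - j2 + m1) div 2 + (z - t), (J - j1 - m2) div 2 + (z - t), (j1 - m1) div 2 - (z - t), (j2 + m2) div 2 - (z - t)] = mset xs"
    unfolding xs_def by (simp only: mset.simps add_mset_commute)
  have "rfun t xs = (if even (t - (z - t)) then 1 else -1) * rfun (z - t) xs"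
    by (rule rfun_sign) (simp_all add: xs_def)
  moreover have "even (t - (z - t)) = even z" by presburger
  ultimately show ?thesis using ys rx rfun_perm[OF ms] z_def by simp
qed

lemma rt_transp:
  assumes "even m1"
  shows "rt K (-m1) N (m1 + m2) N t = (if even (m1 div 2) then 1 else -1) * rt K m1 N m2 N (t - m1 div 2)"
proof -
  define p where "p = m1 div 2"
  define xs where "xs = [t - p, (K + N - N) div 2 - (t - p), (K - m1) div 2 - (t - p), (N + m2) div 2 - (t - p),
                        (N - N + m1) div 2 + (t - p), (N - K - m2) div 2 + (t - p)]"
  have rx: "rt K m1 N m2 N (t - p) = rfun (t - p) xs" by (simp only: rt_def xs_def)
  have ys: "rt K (-m1) N (m1 + m2) N t = rfun t [(N - N + m1) div 2 + (t - p), (K - m1) div 2 - (t - p), (K + N - N) div 2 - (t - p), (N + m2) div 2 - (t - p), t - p, (N - K - m2) div 2 + (t - p)]"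
    unfolding rt_def
    apply (rule arg_cong[where f="rfun t"])
    apply (simp only: list.inject)
    apply (intro conjI)
    using assms unfolding p_def by presburger+
  have ms: "mset [(N - N + m1) div 2 + (t - p), (K - m1) div 2 - (t - p), (K + N - N) div 2 - (t - p), (N + m2) div 2 - (t - p), t - p, (N - K - m2) div 2 + (t - p)] = mset xs"
    unfolding xs_def by (simp only: mset.simps add_mset_commute)
  have "rfun t xs = (if even (t - (t - p)) then 1 else -1) * rfun (t - p) xs"
    by (rule rfun_sign) (simp_all add: xs_def p_def assms)
  then show ?thesis using ys rx rfun_perm[OF ms] p_def by simp
qed


lemma sum_support_eq:
  fixes f :: "'a \<Rightarrow> 'b::comm_monoid_add"
  assumes "finite A" "finite B" "\<And>t. f t \<noteq> 0 \<Longrightarrow> t \<in> A \<and> t \<in> B"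
  shows "sum f A = sum f B"
proof -
  have "sum f A = sum f (A \<inter> B)"
    by (rule sum.mono_neutral_right) (use assms in auto)
  also have "\<dots> = sum f B"
    by (rule sum.mono_neutral_left) (use assms in auto)
  finally show ?thesis .
qed

lemma cg_flip:
  "clebsch_gordan j1 (-m1) j2 (-m2) J (-M) = (if even ((j1+j2-J) div 2) then 1 else -1) * clebsch_gordan j1 m1 j2 m2 J M"
proof (cases "cg_valid j1 m1 j2 m2 J M")
  case False
  then have "\<not> cg_valid j1 (-m1) j2 (-m2) J (-M)" unfolding cg_valid_def by auto
  then show ?thesis using False by (simp add: cg_zero)
next
  case True
  then have V: "cg_valid j1 (-m1) j2 (-m2) J (-M)" unfolding cg_valid_def by auto
  define z where "z = (j1 + j2 - J) div 2"
  have "even (j1 + j2 + J)" using True unfolding cg_valid_def by simp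
  then have ev: "even (j1 + j2 - J)" by presburger
  have p2: "pre2 j1 (-m1) j2 (-m2) J (-M) = pre2 j1 m1 j2 m2 J M"
    unfolding pre2_def by (simp add: ac_simps)
  have "(\<Sum>t\<in>{0..z}. rt j1 (-m1) j2 (-m2) J t) = (\<Sum>t\<in>{0..z}. (if even z then 1 else -1) * rt j1 m1 j2 m2 J (z - t))"
    using rt_flip[OF ev] z_def by simp
  also have "\<dots> = (if even z then 1 else -1) * (\<Sum>t\<in>{0..z}. rt j1 m1 j2 m2 J (z - t))"
    by (simp add: sum_distrib_left)
  also have "(\<Sum>t\<in>{0..z}. rt j1 m1 j2 m2 J (z - t)) = (\<Sum>t\<in>{0..z}. rt j1 m1 j2 m2 J t)"
    by (rule sum.reindex_bij_witness[of _ "\<lambda>t. z - t" "\<lambda>t. z - t"]) auto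
  finally show ?thesis using cg_alt[OF True] cg_alt[OF V] p2 z_def by simp
qed

lemma rt_support: "rt j1 m1 j2 m2 J t \<noteq> 0 \<Longrightarrow>
   0 \<le> t \<and> 0 \<le> (j1 + j2 - J) div 2 - t \<and> 0 \<le> (j1 - m1) div 2 - t \<and> 0 \<le> (j2 + m2) div 2 - t \<and>
   0 \<le> (J - j2 + m1) div 2 + t \<and> 0 \<le> (J - j1 - m2) div 2 + t"
  unfolding rt_def rfun_def by (auto split: if_splits)

lemma cg_transp:
  assumes "even m1"
  shows "clebsch_gordan K m1 N m2 N M = (if even (m1 div 2) then 1 else -1) * clebsch_gordan K (-m1) N M N m2"
proof (cases "cg_valid K m1 N m2 N M")
  case False
  then have "\<not> cg_valid K (-m1) N M N m2" unfolding cg_valid_def by auto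
  then show ?thesis using False by (simp add: cg_zero)
next
  case True
  then have V: "cg_valid K (-m1) N M N m2" unfolding cg_valid_def by auto
  have M: "M = m1 + m2" using True unfolding cg_valid_def by auto
  define z where "z = (K + N - N) div 2"
  define p where "p = m1 div 2"
  define sg :: real where "sg = (if even p then 1 else -1)"
  have sg2: "sg * sg = 1" unfolding sg_def by simp
  have p2: "pre2 K (-m1) N M N m2 = pre2 K m1 N m2 N M"
    unfolding pre2_def by (simp add: ac_simps)
  have "(\<Sum>t\<in>{0..z}. rt K (-m1) N M N t) = (\<Sum>t\<in>{0..z}. sg * rt K m1 N m2 N (t - p))"
    using rt_transp[OF assms, of K N m2] M p_def sg_def by simp
  also have "\<dots> = sg * (\<Sum>t\<in>{0..z}. rt K m1 N m2 N (t - p))"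
    by (simp add: sum_distrib_left)
  also have "(\<Sum>t\<in>{0..z}. rt K m1 N m2 N (t - p)) = (\<Sum>t\<in>{-p..z-p}. rt K m1 N m2 N t)"
    by (rule sum.reindex_bij_witness[of _ "\<lambda>t. t + p" "\<lambda>t. t - p"]) auto
  also have "\<dots> = (\<Sum>t\<in>{0..z}. rt K m1 N m2 N t)"
  proof (rule sum_support_eq)
    fix t assume "rt K m1 N m2 N t \<noteq> 0"
    from rt_support[OF this] have h: "0 \<le> t" "0 \<le> z - t" "0 \<le> (K - m1) div 2 - t" "0 \<le> (N - N + m1) div 2 + t"
      unfolding z_def by auto
    have "(K - m1) div 2 = z - p" "(N - N + m1) div 2 = p" unfolding z_def p_def using assms by presburger+
    then show "t \<in> {-p..z-p} \<and> t \<in> {0..z}" using h by auto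
  qed auto
  finally have S: "(\<Sum>t\<in>{0..z}. rt K (-m1) N M N t) = sg * (\<Sum>t\<in>{0..z}. rt K m1 N m2 N t)" .
  have "clebsch_gordan K (-m1) N M N m2 = sg * clebsch_gordan K m1 N m2 N M"
    using cg_alt[OF True] cg_alt[OF V] p2 S z_def by simp
  then have "sg * clebsch_gordan K (-m1) N M N m2 = clebsch_gordan K m1 N m2 N M"
    using sg2 by (metis mult.assoc mult_1)
  then show ?thesis using sg_def p_def by simp
qed



lemma st_entry: "r \<le> n \<Longrightarrow> c \<le> n \<Longrightarrow> spherical_tensor n k q $$ (r, c) =
   complex_of_real (sqrt ((2 * real k + 1) / (real n + 1))
       * clebsch_gordan (2 * int k) (2 * q) (int n) (2 * int c - int n) (int n) (2 * int r - int n))"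
  unfolding spherical_tensor_def by simp

lemma st_flip:
  assumes "r \<le> n" "c \<le> n"
  shows "spherical_tensor n k q $$ (n - r, n - c) = (-1) ^ k * spherical_tensor n k (-q) $$ (r, c)"
proof -
  have F: "clebsch_gordan (2 * int k) (- (- (2 * q))) (int n) (- (2 * int c - int n)) (int n) (- (2 * int r - int n))
    = (if even ((2 * int k + int n - int n) div 2) then 1 else -1) * clebsch_gordan (2 * int k) (- (2 * q)) (int n) (2 * int c - int n) (int n) (2 * int r - int n)"
    by (rule cg_flip)
  have s: "(2 * int k + int n - int n) div 2 = int k" by simp
  have e: "clebsch_gordan (2 * int k) (2 * q) (int n) (2 * int (n - c) - int n) (int n) (2 * int (n - r) - int n)
     = (if even k then 1 else -1) * clebsch_gordan (2 * int k) (2 * (- q)) (int n) (2 * int c - int n) (int n) (2 * int r - int n)"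
    using assms F unfolding s by (simp add: of_nat_diff)
  have "spherical_tensor n k q $$ (n - r, n - c) = complex_of_real (sqrt ((2 * real k + 1) / (real n + 1))
       * clebsch_gordan (2 * int k) (2 * q) (int n) (2 * int (n - c) - int n) (int n) (2 * int (n - r) - int n))"
    by (rule st_entry) auto
  also have "\<dots> = (-1) ^ k * complex_of_real (sqrt ((2 * real k + 1) / (real n + 1))
       * clebsch_gordan (2 * int k) (2 * (- q)) (int n) (2 * int c - int n) (int n) (2 * int r - int n))"
    unfolding e by simp
  also have "\<dots> = (-1) ^ k * spherical_tensor n k (-q) $$ (r, c)"
    using assms by (simp only: st_entry)
  finally show ?thesis .
qed

lemma st_transp:
  assumes "r \<le> n" "c \<le> n"
  shows "spherical_tensor n k q $$ (r, c) = (if even q then 1 else -1) * spherical_tensor n k (-q) $$ (c, r)"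
proof -
  have "clebsch_gordan (2 * int k) (2 * q) (int n) (2 * int c - int n) (int n) (2 * int r - int n)
    = (if even q then 1 else -1) * clebsch_gordan (2 * int k) (- (2 * q)) (int n) (2 * int r - int n) (int n) (2 * int c - int n)"
    using cg_transp[of "2 * q" "2 * int k" "int n" "2 * int c - int n" "2 * int r - int n"] by simp
  then show ?thesis using assms by (simp add: st_entry)
qed

lemma st_support:
  assumes "r \<le> n" "c \<le> n" "spherical_tensor n k q $$ (r, c) \<noteq> 0"
  shows "int r = int c + q"
proof -
  have "clebsch_gordan (2 * int k) (2 * q) (int n) (2 * int c - int n) (int n) (2 * int r - int n) \<noteq> 0"
    using assms by (auto simp: st_entry)
  then have "cg_valid (2 * int k) (2 * q) (int n) (2 * int c - int n) (int n) (2 * int r - int n)"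
    using cg_zero by blast
  then show ?thesis unfolding cg_valid_def by simp
qed

definition GG :: "nat \<Rightarrow> nat \<Rightarrow> int \<Rightarrow> (nat \<Rightarrow> complex) \<Rightarrow> (nat \<Rightarrow> complex) \<Rightarrow> complex" where
  "GG n k q f g = (\<Sum>r<n+1. \<Sum>c<n+1. f r * spherical_tensor n k q $$ (r, c) * g c)"

lemma GG_transp: "GG n k q f g = (if even q then 1 else -1) * GG n k (-q) g f"
proof -
  have "GG n k q f g = (\<Sum>r<n+1. \<Sum>c<n+1. (if even q then 1 else -1) * (g c * spherical_tensor n k (-q) $$ (c, r) * f r))"
    unfolding GG_def
    by (intro sum.cong refl) (simp add: st_transp[of _ n _ k q] less_Suc_eq_le)
  also have "\<dots> = (\<Sum>c<n+1. \<Sum>r<n+1. (if even q then 1 else -1) * (g c * spherical_tensor n k (-q) $$ (c, r) * f r))"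
    by (rule sum.swap)
  also have "\<dots> = (if even q then 1 else -1) * (\<Sum>c<n+1. \<Sum>r<n+1. g c * spherical_tensor n k (-q) $$ (c, r) * f r)"
    by (simp only: sum_distrib_left)
  finally show ?thesis unfolding GG_def .
qed

lemma sum_reflect: "(\<Sum>r<(n::nat)+1. h r) = (\<Sum>r<n+1. h (n - r))"
  by (rule sum.reindex_bij_witness[of _ "\<lambda>r. n - r" "\<lambda>r. n - r"]) (auto simp: less_Suc_eq_le)

lemma GG_flip:
  assumes "\<And>r. r \<le> n \<Longrightarrow> f r = \<alpha> * f0 (n - r)" "\<And>c. c \<le> n \<Longrightarrow> g c = \<beta> * g0 (n - c)"
  shows "GG n k q f g = \<alpha> * \<beta> * (-1) ^ k * GG n k (-q) f0 g0"
proof -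
  have "GG n k q f g = (\<Sum>r<n+1. \<Sum>c<n+1. f (n - r) * spherical_tensor n k q $$ (n - r, n - c) * g (n - c))"
    unfolding GG_def by (subst sum_reflect, subst sum_reflect, rule refl)
  also have "\<dots> = (\<Sum>r<n+1. \<Sum>c<n+1. \<alpha> * \<beta> * (-1) ^ k * (f0 r * spherical_tensor n k (-q) $$ (r, c) * g0 c))"
    by (intro sum.cong refl) (simp add: st_flip assms less_Suc_eq_le)
  also have "\<dots> = \<alpha> * \<beta> * (-1) ^ k * GG n k (-q) f0 g0"
    unfolding GG_def by (simp only: sum_distrib_left)
  finally show ?thesis .
qed

lemma GG_support:
  fixes m :: int
  assumes "\<And>r. r \<le> n \<Longrightarrow> f r \<noteq> 0 \<Longrightarrow> m dvd (int n - 2 * int r + e1)"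
    "\<And>c. c \<le> n \<Longrightarrow> g c \<noteq> 0 \<Longrightarrow> m dvd (int n - 2 * int c + e2)"
    "GG n k q f g \<noteq> 0"
  shows "m dvd (2 * q + e2 - e1)"
proof (rule ccontr)
  assume nd: "\<not> m dvd (2 * q + e2 - e1)"
  have "GG n k q f g = 0" unfolding GG_def
  proof (intro sum.neutral ballI)
    fix r c assume r: "r \<in> {..<n+1}" and c: "c \<in> {..<n+1}"
    show "f r * spherical_tensor n k q $$ (r, c) * g c = 0"
    proof (rule ccontr)
      assume "f r * spherical_tensor n k q $$ (r, c) * g c \<noteq> 0"
      then have h: "f r \<noteq> 0" "spherical_tensor n k q $$ (r, c) \<noteq> 0" "g c \<noteq> 0" by auto
      have rc: "r \<le> n" "c \<le> n" using r c by auto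
      have "int r = int c + q" using st_support[OF rc h(2)] .
      moreover have "m dvd (int n - 2 * int r + e1)" using assms(1)[OF rc(1) h(1)] .
      moreover have "m dvd (int n - 2 * int c + e2)" using assms(2)[OF rc(2) h(3)] .
      ultimately have "m dvd ((int n - 2 * int c + e2) - (int n - 2 * int r + e1))" by (metis dvd_diff)
      moreover have "(int n - 2 * int c + e2) - (int n - 2 * int r + e1) = 2 * q + e2 - e1"
        using \<open>int r = int c + q\<close> by simp
      ultimately show False using nd by metis
    qed
  qed
  then show False using assms(3) by simp
qed




lemma mult_entry:
  assumes "A \<in> carrier_mat m p" "B \<in> carrier_mat p q" "i < m" "j < q"
  shows "(A * B) $$ (i, j) = (\<Sum>l<p. A $$ (i, l) * B $$ (l, j))"
  using assms by (simp add: scalar_prod_def atLeast0LessThan)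

lemma mat2_carrier: "mat2 a b c d \<in> carrier_mat 2 2" by (simp add: mat2_def)

lemma mat2_idx: "mat2 a b c d $$ (0,0) = a" "mat2 a b c d $$ (0,1) = b"
   "mat2 a b c d $$ (1,0) = c" "mat2 a b c d $$ (1,1) = d"
  by (simp_all add: mat2_def)

lemma mat2_idx2[simp]: "mat2 a b c d $$ (0,0) = a" "mat2 a b c d $$ (0,Suc 0) = b"
   "mat2 a b c d $$ (Suc 0,0) = c" "mat2 a b c d $$ (Suc 0,Suc 0) = d"
  by (simp_all add: mat2_def)

lemma sum2: "(\<Sum>l<(2::nat). f l) = f 0 + (f 1 :: 'a::comm_monoid_add)"
  by (simp add: numeral_2_eq_2)

lemma matPh_mult: "matPh x * matPh y = matPh (x + y)"
proof (rule eq_matI)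
  fix i j assume "i < dim_row (matPh (x + y))" "j < dim_col (matPh (x + y))"
  then have ij: "i < 2" "j < 2" by (simp_all add: matPh_def mat2_def)
  have "(matPh x * matPh y) $$ (i, j) = (\<Sum>l<2. matPh x $$ (i, l) * matPh y $$ (l, j))"
    using ij by (intro mult_entry[of _ 2 2]) (simp_all add: matPh_def mat2_carrier)
  also have "\<dots> = matPh (x + y) $$ (i, j)"
    using ij unfolding sum2 matPh_def
    by (auto simp: mat2_idx less_2_cases_iff cis_mult algebra_simps add_divide_distrib diff_divide_distrib)
  finally show "(matPh x * matPh y) $$ (i, j) = matPh (x + y) $$ (i, j)" .
qed (simp_all add: matPh_def mat2_def)

lemma matPh_pow: "matPh x ^\<^sub>m k = matPh (real k * x)"
proof (induction k)
  case 0
  show ?case by (rule eq_matI) (auto simp: matPh_def mat2_def less_2_cases_iff)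
next
  case (Suc k)
  then show ?case by (simp add: matPh_mult algebra_simps)
qed

lemma spin_rep_X:
  assumes "r \<le> n" "c \<le> n"
  shows "spin_rep n matX $$ (r, c) = (if r = n - c then (- \<i>) ^ n else 0)"
proof -
  have X: "matX $$ (0,0) = 0" "matX $$ (1,0) = - \<i>" "matX $$ (0,1) = - \<i>" "matX $$ (1,1) = 0"
    by (simp_all add: matX_def mat2_idx)
  define S where "S = (\<lambda>a. if a \<le> r \<and> r - a \<le> n - c then
          of_nat (c choose a) * of_nat ((n - c) choose (r - a))
          * (matX $$ (0,0)) ^ a * (matX $$ (1,0)) ^ (c - a)
          * (matX $$ (0,1)) ^ (r - a) * (matX $$ (1,1)) ^ (n - c - (r - a))
        else (0::complex))"
  have Sa: "S a = (if a = 0 \<and> r = n - c then (- \<i>) ^ n else 0)" for a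
  proof (cases "a = 0")
    case True
    show ?thesis
    proof (cases "r = n - c")
      case True
      then have "c + r = n" using assms by simp
      then show ?thesis using True \<open>a = 0\<close> unfolding S_def X by (simp flip: power_add)
    next
      case False
      then show ?thesis using True unfolding S_def X by auto
    qed
  next
    case False
    then show ?thesis unfolding S_def X by simp
  qed
  have sum: "(\<Sum>a\<in>{0..c}. S a) = (if r = n - c then (- \<i>) ^ n else 0)"
    unfolding Sa by (simp add: sum.delta)
  have "spin_rep n matX $$ (r, c) = complex_of_real (sqrt (fact r * fact (n - r) / (fact c * fact (n - c)))) * (\<Sum>a\<in>{0..c}. S a)"
    unfolding spin_rep_def S_def using assms by simp
  also have "\<dots> = (if r = n - c then (- \<i>) ^ n else 0)"
  proof (cases "r = n - c")
    case True
    then have "n - r = c" using assms by simp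
    then show ?thesis using True sum by simp
  qed (simp add: sum)
  finally show ?thesis .
qed

lemma spin_rep_Ph:
  assumes "r \<le> n" "c \<le> n"
  shows "spin_rep n (matPh x) $$ (r, c) = (if r = c then cis (- x / 2) ^ r * cis (x / 2) ^ (n - r) else 0)"
proof -
  have P: "matPh x $$ (0,0) = cis (- x / 2)" "matPh x $$ (1,0) = 0" "matPh x $$ (0,1) = 0" "matPh x $$ (1,1) = cis (x / 2)"
    by (simp_all add: matPh_def mat2_idx)
  define S where "S = (\<lambda>a. if a \<le> r \<and> r - a \<le> n - c then
          of_nat (c choose a) * of_nat ((n - c) choose (r - a))
          * (matPh x $$ (0,0)) ^ a * (matPh x $$ (1,0)) ^ (c - a)
          * (matPh x $$ (0,1)) ^ (r - a) * (matPh x $$ (1,1)) ^ (n - c - (r - a))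
        else (0::complex))"
  have Sa: "S a = (if a = c \<and> r = c then cis (- x / 2) ^ r * cis (x / 2) ^ (n - r) else 0)" if "a \<le> c" for a
  proof (cases "a = c \<and> r = c")
    case True
    then show ?thesis unfolding S_def P by simp
  next
    case False
    then have "c - a \<noteq> 0 \<or> (a \<le> r \<and> r - a \<noteq> 0) \<or> \<not> a \<le> r" using that by auto
    then show ?thesis using False unfolding S_def P by auto
  qed
  have sum: "(\<Sum>a\<in>{0..c}. S a) = (if r = c then cis (- x / 2) ^ r * cis (x / 2) ^ (n - r) else 0)"
  proof -
    have "(\<Sum>a\<in>{0..c}. S a) = (\<Sum>a\<in>{0..c}. if a = c then (if r = c then cis (- x / 2) ^ r * cis (x / 2) ^ (n - r) else 0) else 0)"
      by (intro sum.cong refl) (simp add: Sa)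
    then show ?thesis by simp
  qed
  have "spin_rep n (matPh x) $$ (r, c) = complex_of_real (sqrt (fact r * fact (n - r) / (fact c * fact (n - c)))) * (\<Sum>a\<in>{0..c}. S a)"
    unfolding spin_rep_def S_def using assms by simp
  also have "\<dots> = (if r = c then cis (- x / 2) ^ r * cis (x / 2) ^ (n - r) else 0)"
    using sum by simp
  finally show ?thesis .
qed

lemma cis_eq_int:
  assumes "cis x = cis y"
  shows "\<exists>m::int. x - y = 2 * pi * m"
proof -
  have "cis (x - y) = 1" using assms by (simp flip: cis_divide)
  then have "exp (\<i> * complex_of_real (x - y)) = 1" by (simp add: cis_conv_exp)
  then obtain m :: int where "Im (\<i> * complex_of_real (x - y)) = of_int (2 * m) * pi"
    by (auto simp: exp_eq_1)
  then show ?thesis by (intro exI[of _ m]) simp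
qed


lemma spin_rep_carrier: "spin_rep n g \<in> carrier_mat (n+1) (n+1)"
  by (simp add: spin_rep_def)

lemma matPh_carrier: "matPh x \<in> carrier_mat 2 2"
  by (simp add: matPh_def mat2_carrier)

lemma matX_carrier: "matX \<in> carrier_mat 2 2"
  by (simp add: matX_def mat2_carrier)

lemma covX_entry:
  assumes V: "V \<in> carrier_mat (n + 1) 2" and cov: "spin_rep n matX * V = V * matX"
    and r: "r \<le> n"
  shows "V $$ (r, 1) = \<i> * (- \<i>) ^ n * V $$ (n - r, 0)" "V $$ (r, 0) = \<i> * (- \<i>) ^ n * V $$ (n - r, 1)"
proof -
  have L: "(spin_rep n matX * V) $$ (r, u) = (- \<i>) ^ n * V $$ (n - r, u)" if u: "u < 2" for u
  proof -
    have "(spin_rep n matX * V) $$ (r, u) = (\<Sum>l<n+1. spin_rep n matX $$ (r, l) * V $$ (l, u))"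
      using r u by (intro mult_entry[OF spin_rep_carrier V]) auto
    also have "\<dots> = (\<Sum>l<n+1. if l = n - r then (- \<i>) ^ n * V $$ (l, u) else 0)"
      using r by (intro sum.cong refl) (auto simp: spin_rep_X)
    also have "\<dots> = (- \<i>) ^ n * V $$ (n - r, u)" by simp
    finally show ?thesis .
  qed
  have R: "(V * matX) $$ (r, u) = V $$ (r, 0) * matX $$ (0, u) + V $$ (r, 1) * matX $$ (1, u)" if u: "u < 2" for u
    using r u by (simp add: mult_entry[OF V matX_carrier] sum2)
  have "(- \<i>) ^ n * V $$ (n - r, 0) = V $$ (r, 1) * (- \<i>)"
    using L[of 0] R[of 0] cov by (simp add: matX_def)
  then have "\<i> * ((- \<i>) ^ n * V $$ (n - r, 0)) = \<i> * (V $$ (r, 1) * (- \<i>))" by simp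
  then show "V $$ (r, 1) = \<i> * (- \<i>) ^ n * V $$ (n - r, 0)" by (simp add: algebra_simps)
  have "(- \<i>) ^ n * V $$ (n - r, 1) = V $$ (r, 0) * (- \<i>)"
    using L[of 1] R[of 1] cov by (simp add: matX_def)
  then have "\<i> * ((- \<i>) ^ n * V $$ (n - r, 1)) = \<i> * (V $$ (r, 0) * (- \<i>))" by simp
  then show "V $$ (r, 0) = \<i> * (- \<i>) ^ n * V $$ (n - r, 1)" by (simp add: algebra_simps)
qed



lemma phase_dvd:
  fixes b :: nat and E :: int
  assumes b: "1 \<le> b" and r: "r \<le> n"
    and eq: "cis (- (pi / b) / 2) ^ r * cis ((pi / b) / 2) ^ (n - r) = cis (real_of_int E * (pi / b) / 2)"
  shows "(4 * int b) dvd (int n - 2 * int r - E)"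
proof -
  have "cis (- (pi / b) / 2) ^ r * cis ((pi / b) / 2) ^ (n - r) = cis (real r * (- (pi / b) / 2) + real (n - r) * ((pi / b) / 2))"
    by (simp only: Complex.DeMoivre cis_mult)
  then obtain m :: int where m: "real r * (- (pi / b) / 2) + real (n - r) * ((pi / b) / 2) - real_of_int E * (pi / b) / 2 = 2 * pi * m"
    using cis_eq_int eq by metis
  have bpos: "real b > 0" using b by simp
  define c where "c = pi / b"
  have cb: "c * b = pi" using bpos by (simp add: c_def)
  have nr: "real (n - r) = real n - real r" using r by (simp add: of_nat_diff)
  have m': "real r * (- c / 2) + (real n - real r) * (c / 2) - real_of_int E * c / 2 = 2 * pi * m"
    using m unfolding c_def nr .
  have "(real n - 2 * real r - real_of_int E) * c = 2 * (real r * (- c / 2) + (real n - real r) * (c / 2) - real_of_int E * c / 2)"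
    by (simp add: field_simps)
  then have h1: "(real n - 2 * real r - real_of_int E) * c = 4 * pi * m" unfolding m' by simp
  have "(real n - 2 * real r - real_of_int E) * pi = ((real n - 2 * real r - real_of_int E) * c) * b"
    by (simp add: cb mult.assoc)
  also have "\<dots> = (4 * b * m) * pi" unfolding h1 by simp
  finally have "real n - 2 * real r - real_of_int E = 4 * b * m"
    using pi_gt_zero by simp
  then have "real_of_int (int n - 2 * int r - E) = real_of_int (4 * int b * m)" by simp
  then have "int n - 2 * int r - E = 4 * int b * m" by (simp only: of_int_eq_iff)
  then show ?thesis by simp
qed

lemma covPh_entry:
  fixes b a :: nat
  assumes V: "V \<in> carrier_mat (n + 1) 2" and b: "1 \<le> b" and a: "1 \<le> a"
    and cov: "spin_rep n (matPh (pi / b)) * V = V * matPh (pi / b) ^\<^sub>m (2 * a - 1)"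
    and r: "r \<le> n"
  shows "V $$ (r, 0) \<noteq> 0 \<Longrightarrow> (4 * int b) dvd (int n - 2 * int r + (2 * int a - 1))"
    "V $$ (r, 1) \<noteq> 0 \<Longrightarrow> (4 * int b) dvd (int n - 2 * int r + (1 - 2 * int a))"
proof -
  define P where "P = cis (- (pi / b) / 2) ^ r * cis ((pi / b) / 2) ^ (n - r)"
  define th where "th = real (2 * a - 1) * (pi / b)"
  have th2: "real (2 * a - Suc 0) = 2 * real a - 1" using a by (simp add: of_nat_diff)
  have L: "(spin_rep n (matPh (pi / b)) * V) $$ (r, u) = P * V $$ (r, u)" if u: "u < 2" for u
  proof -
    have "(spin_rep n (matPh (pi / b)) * V) $$ (r, u) = (\<Sum>l<n+1. spin_rep n (matPh (pi / b)) $$ (r, l) * V $$ (l, u))"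
      using r u by (intro mult_entry[OF spin_rep_carrier V]) auto
    also have "\<dots> = (\<Sum>l<n+1. if l = r then P * V $$ (l, u) else 0)"
      using r by (intro sum.cong refl) (auto simp: spin_rep_Ph P_def)
    also have "\<dots> = P * V $$ (r, u)" using r by simp
    finally show ?thesis .
  qed
  have R: "(V * matPh th) $$ (r, u) = V $$ (r, 0) * matPh th $$ (0, u) + V $$ (r, 1) * matPh th $$ (1, u)" if u: "u < 2" for u
    using r u by (simp add: mult_entry[OF V matPh_carrier] sum2)
  have th_real: "th = (2 * real a - 1) * (pi / b)" using th2 by (simp add: th_def)
  have cov': "spin_rep n (matPh (pi / b)) * V = V * matPh th" using cov by (simp add: matPh_pow th_def)
  show "(4 * int b) dvd (int n - 2 * int r + (2 * int a - 1))" if nz: "V $$ (r, 0) \<noteq> 0"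
  proof -
    have "V $$ (r, 0) * P = (V * matPh th) $$ (r, 0)" using L[of 0] cov' by (simp add: mult.commute)
    also have "\<dots> = V $$ (r, 0) * cis (- th / 2)" using R[of 0] by (simp add: matPh_def)
    finally have "P = cis (- th / 2)" using nz by simp
    moreover have "- th / 2 = real_of_int (- (2 * int a - 1)) * (pi / b) / 2" unfolding th_real by (simp add: algebra_simps)
    ultimately have Peq: "P = cis (real_of_int (- (2 * int a - 1)) * (pi / b) / 2)" by simp
    have e: "int n - 2 * int r - (- (2 * int a - 1)) = int n - 2 * int r + (2 * int a - 1)" by simp
    from phase_dvd[OF b r Peq[unfolded P_def]] show ?thesis unfolding e .
  qed
  show "(4 * int b) dvd (int n - 2 * int r + (1 - 2 * int a))" if nz: "V $$ (r, 1) \<noteq> 0"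
  proof -
    have "V $$ (r, 1) * P = (V * matPh th) $$ (r, 1)" using L[of 1] cov' by (simp add: mult.commute)
    also have "\<dots> = V $$ (r, 1) * cis (th / 2)" using R[of 1] by (simp add: matPh_def)
    finally have "P = cis (th / 2)" using nz by simp
    moreover have "th / 2 = real_of_int (2 * int a - 1) * (pi / b) / 2" unfolding th_real by (simp add: algebra_simps)
    ultimately have "P = cis (real_of_int (2 * int a - 1) * (pi / b) / 2)" by simp
    from phase_dvd[OF b r this[unfolded P_def]] show ?thesis by (simp add: algebra_simps)
  qed
qed


lemma dvd4_2:
  fixes B w :: int
  assumes "(4 * B) dvd (2 * w)"
  shows "(2 * B) dvd w"
proof -
  from assms obtain m where m: "2 * w = 4 * B * m" unfolding dvd_def by blast
  then have "2 * w = 2 * (2 * B * m)" by (simp add: algebra_simps)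
  then have "w = 2 * B * m" by simp
  then show ?thesis by simp
qed

lemma braket_GG:
  assumes hV: "V \<in> carrier_mat (n + 1) 2"
    and real: "\<forall>i<n + 1. \<forall>u<2. V $$ (i, u) \<in> \<real>"
    and u: "u < 2" and v: "v < 2"
  shows "braket (col V u) (spherical_tensor n k q) (col V v) = GG n k q (\<lambda>r. V $$ (r, u)) (\<lambda>c. V $$ (c, v))"
proof -
  have dims: "dim_row V = n + 1" "dim_col V = 2" using hV by auto
  have dT: "dim_row (spherical_tensor n k q) = n + 1" "dim_col (spherical_tensor n k q) = n + 1"
    by (simp_all add: spherical_tensor_def)
  have inner: "(spherical_tensor n k q *\<^sub>v col V v) $ i = (\<Sum>j<n+1. spherical_tensor n k q $$ (i, j) * V $$ (j, v))"
    if i: "i < n + 1" for i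
  proof -
    have "(spherical_tensor n k q *\<^sub>v col V v) $ i = row (spherical_tensor n k q) i \<bullet> col V v"
      using i dT by simp
    also have "\<dots> = (\<Sum>j\<in>{0..<n+1}. row (spherical_tensor n k q) i $ j * col V v $ j)"
      by (simp add: scalar_prod_def dims)
    also have "\<dots> = (\<Sum>j<n+1. spherical_tensor n k q $$ (i, j) * V $$ (j, v))"
      unfolding atLeast0LessThan using i dT dims v by (intro sum.cong refl) simp
    finally show ?thesis .
  qed
  have "braket (col V u) (spherical_tensor n k q) (col V v)
      = (\<Sum>i<n+1. cnj (col V u $ i) * (spherical_tensor n k q *\<^sub>v col V v) $ i)"
    unfolding braket_def cinner_def by (simp add: dims)
  also have "\<dots> = (\<Sum>i<n+1. V $$ (i, u) * (\<Sum>j<n+1. spherical_tensor n k q $$ (i, j) * V $$ (j, v)))"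
  proof (intro sum.cong refl)
    fix i assume "i \<in> {..<n+1}"
    then have i: "i < n + 1" by simp
    have "cnj (V $$ (i, u)) = V $$ (i, u)" using real i u by (simp add: Reals_cnj_iff)
    then show "cnj (col V u $ i) * (spherical_tensor n k q *\<^sub>v col V v) $ i
        = V $$ (i, u) * (\<Sum>j<n+1. spherical_tensor n k q $$ (i, j) * V $$ (j, v))"
      using i u dims by (simp add: inner)
  qed
  also have "\<dots> = GG n k q (\<lambda>r. V $$ (r, u)) (\<lambda>c. V $$ (c, v))"
    unfolding GG_def by (simp only: sum_distrib_left mult.assoc)
  finally show ?thesis .
qed

theorem theorem2:
  fixes n :: nat and b a d :: nat and V :: "complex mat"
  assumes hb: "1 \<le> b" and ha: "1 \<le> a" "a \<le> b"
    and hV: "V \<in> carrier_mat (n + 1) 2"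
    and isometry: "\<forall>u<2. \<forall>v<2. cinner (col V u) (col V v) = (if u = v then 1 else 0)"
    and covariant: "\<forall>(g, h) \<in> bd_graph b a. spin_rep n g * V = V * h"
    and real_codewords: "\<forall>i<n + 1. \<forall>u<2. V $$ (i, u) \<in> \<real>"
    and hd: "1 \<le> d"
  shows "(\<forall>k q. k < d \<longrightarrow> k \<le> n \<longrightarrow> \<bar>q\<bar> \<le> int k \<longrightarrow> spin_KL n V k q)
     \<longleftrightarrow>
     ((\<forall>k q. k < d \<longrightarrow> k \<le> n \<longrightarrow> odd k \<longrightarrow> 0 \<le> q \<longrightarrow> q \<le> int k
          \<longrightarrow> q mod (2 * int b) = 0 \<longrightarrow>
          braket (col V 0) (spherical_tensor n k q) (col V 0)
            = braket (col V 1) (spherical_tensor n k q) (col V 1))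
      \<and>
      (\<forall>k q. k < d \<longrightarrow> k \<le> n \<longrightarrow> odd k \<longrightarrow> - int k \<le> q \<longrightarrow> q \<le> int k
          \<longrightarrow> q mod (2 * int b) = (2 * int a - 1) mod (2 * int b) \<longrightarrow>
          braket (col V 0) (spherical_tensor n k q) (col V 1) = 0))"
proof -
  define x where "x = (\<lambda>r. V $$ (r, 0))"
  define y where "y = (\<lambda>r. V $$ (r, 1))"
  define s where "s = \<i> * (- \<i>) ^ n"
  define sg :: "int \<Rightarrow> complex" where "sg q = (if even q then 1 else -1)" for q
  have B00: "braket (col V 0) (spherical_tensor n k q) (col V 0) = GG n k q x x" for k q
    unfolding x_def by (rule braket_GG[OF hV real_codewords]) auto
  have B11: "braket (col V 1) (spherical_tensor n k q) (col V 1) = GG n k q y y" for k q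
    unfolding y_def by (rule braket_GG[OF hV real_codewords]) auto
  have B01: "braket (col V 0) (spherical_tensor n k q) (col V 1) = GG n k q x y" for k q
    unfolding x_def y_def by (rule braket_GG[OF hV real_codewords]) auto
  have B10: "braket (col V 1) (spherical_tensor n k q) (col V 0) = GG n k q y x" for k q
    unfolding x_def y_def by (rule braket_GG[OF hV real_codewords]) auto
  have covX: "spin_rep n matX * V = V * matX" using covariant bd_graph.genX[of b a] by fastforce
  have covPh: "spin_rep n (matPh (pi / b)) * V = V * matPh (pi / b) ^\<^sub>m (2 * a - 1)"
    using covariant bd_graph.genPh[of b a] by fastforce
  have yx: "y r = s * x (n - r)" if "r \<le> n" for r
    using covX_entry(1)[OF hV covX that] unfolding x_def y_def s_def .
  have xy: "x r = s * y (n - r)" if "r \<le> n" for r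
    using covX_entry(2)[OF hV covX that] unfolding x_def y_def s_def .
  have sx: "(4 * int b) dvd (int n - 2 * int r + (2 * int a - 1))" if "r \<le> n" "x r \<noteq> 0" for r
    using covPh_entry(1)[OF hV hb ha(1) covPh that(1)] that(2) unfolding x_def .
  have sy: "(4 * int b) dvd (int n - 2 * int r + (1 - 2 * int a))" if "r \<le> n" "y r \<noteq> 0" for r
    using covPh_entry(2)[OF hV hb ha(1) covPh that(1)] that(2) unfolding y_def .
  have "\<exists>r\<le>n. x r \<noteq> 0"
  proof (rule ccontr)
    assume "\<not> (\<exists>r\<le>n. x r \<noteq> 0)"
    then have z: "x r = 0" if "r \<le> n" for r using that by auto
    have "cinner (col V 0) (col V 0) = (\<Sum>i<n+1. cnj (col V 0 $ i) * col V 0 $ i)"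
      unfolding cinner_def using hV by simp
    also have "\<dots> = 0"
    proof (intro sum.neutral ballI)
      fix i assume "i \<in> {..<n+1}"
      then have "i < n + 1" by simp
      then have "col V 0 $ i = 0" using hV z[of i] unfolding x_def by simp
      then show "cnj (col V 0 $ i) * col V 0 $ i = 0" by simp
    qed
    finally show False using isometry by simp
  qed
  then obtain r0 where r0: "r0 \<le> n" "x r0 \<noteq> 0" by blast
  have "(2::int) dvd (4 * int b)" by simp
  then have "(2::int) dvd (int n - 2 * int r0 + (2 * int a - 1))" using sx[OF r0] dvd_trans by blast
  then have nodd: "odd n" by presburger
  have s2: "s * s = 1"
  proof -
    have "s * s = (\<i> * \<i>) * ((- \<i>) ^ n * (- \<i>) ^ n)" unfolding s_def by (simp only: ac_simps)
    also have "(- \<i>) ^ n * (- \<i>) ^ n = ((- \<i>) * (- \<i>)) ^ n" by (simp only: power_mult_distrib)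
    also have "\<dots> = (-1) ^ n" by simp
    also have "(-1::complex) ^ n = -1" using nodd by simp
    finally show ?thesis by simp
  qed
  have sgm: "sg (- q) = sg q" for q unfolding sg_def by simp
  have R1: "GG n k q y y = (-1) ^ k * sg q * GG n k q x x" for k q
  proof -
    have "GG n k q y y = s * s * (-1) ^ k * GG n k (-q) x x" by (rule GG_flip) (erule yx, erule yx)
    also have "GG n k (-q) x x = sg q * GG n k q x x" using GG_transp[of n k "-q" x x] sgm unfolding sg_def by simp
    finally show ?thesis using s2 by simp
  qed
  have R2: "GG n k q x y = (-1) ^ k * sg q * GG n k q x y" for k q
  proof -
    have "GG n k q x y = s * s * (-1) ^ k * GG n k (-q) y x" by (rule GG_flip) (erule xy, erule yx)
    also have "GG n k (-q) y x = sg q * GG n k q x y" using GG_transp[of n k "-q" y x] sgm unfolding sg_def by simp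
    finally show ?thesis using s2 by simp
  qed
  have R3: "GG n k q y x = sg q * GG n k (-q) x y" for k q
    using GG_transp[of n k q y x] unfolding sg_def by simp
  have R4x: "GG n k q x x = sg q * GG n k (-q) x x" for k q
    using GG_transp[of n k q x x] unfolding sg_def by simp
  have R4y: "GG n k q y y = sg q * GG n k (-q) y y" for k q
    using GG_transp[of n k q y y] unfolding sg_def by simp
  have Sxx: "(2 * int b) dvd q" if "GG n k q x x \<noteq> 0" for k q
  proof -
    have "(4 * int b) dvd (2 * q + (2 * int a - 1) - (2 * int a - 1))"
      by (rule GG_support[OF _ _ that]) (simp_all add: sx)
    then show ?thesis by (intro dvd4_2) simp
  qed
  have Syy: "(2 * int b) dvd q" if "GG n k q y y \<noteq> 0" for k q
  proof -
    have "(4 * int b) dvd (2 * q + (1 - 2 * int a) - (1 - 2 * int a))"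
      by (rule GG_support[OF _ _ that]) (simp_all add: sy)
    then show ?thesis by (intro dvd4_2) simp
  qed
  have Sxy: "(2 * int b) dvd (q - (2 * int a - 1))" if "GG n k q x y \<noteq> 0" for k q
  proof -
    have "(4 * int b) dvd (2 * q + (1 - 2 * int a) - (2 * int a - 1))"
      by (rule GG_support[OF _ _ that]) (simp_all add: sx sy)
    moreover have "2 * q + (1 - 2 * int a) - (2 * int a - 1) = 2 * (q - (2 * int a - 1))" by simp
    ultimately show ?thesis by (intro dvd4_2) simp
  qed
  show ?thesis
  proof
    assume KL: "\<forall>k q. k < d \<longrightarrow> k \<le> n \<longrightarrow> \<bar>q\<bar> \<le> int k \<longrightarrow> spin_KL n V k q"
    have "braket (col V 0) (spherical_tensor n k q) (col V 0) = braket (col V 1) (spherical_tensor n k q) (col V 1)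
       \<and> braket (col V 0) (spherical_tensor n k q) (col V 1) = 0"
      if "k < d" "k \<le> n" "\<bar>q\<bar> \<le> int k" for k q
    proof -
      have "spin_KL n V k q" using KL that by blast
      then obtain c where c: "\<forall>u<2. \<forall>v<2. braket (col V u) (spherical_tensor n k q) (col V v) = (if u = v then c else 0)"
        unfolding spin_KL_def by blast
      show ?thesis using c[rule_format, of 0 0] c[rule_format, of 1 1] c[rule_format, of 0 1] by simp
    qed
    then have H: "\<And>k q. k < d \<Longrightarrow> k \<le> n \<Longrightarrow> \<bar>q\<bar> \<le> int k \<Longrightarrow>
       braket (col V 0) (spherical_tensor n k q) (col V 0) = braket (col V 1) (spherical_tensor n k q) (col V 1)
       \<and> braket (col V 0) (spherical_tensor n k q) (col V 1) = 0" by blast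
    show "(\<forall>k q. k < d \<longrightarrow> k \<le> n \<longrightarrow> odd k \<longrightarrow> 0 \<le> q \<longrightarrow> q \<le> int k
          \<longrightarrow> q mod (2 * int b) = 0 \<longrightarrow>
          braket (col V 0) (spherical_tensor n k q) (col V 0)
            = braket (col V 1) (spherical_tensor n k q) (col V 1))
      \<and>
      (\<forall>k q. k < d \<longrightarrow> k \<le> n \<longrightarrow> odd k \<longrightarrow> - int k \<le> q \<longrightarrow> q \<le> int k
          \<longrightarrow> q mod (2 * int b) = (2 * int a - 1) mod (2 * int b) \<longrightarrow>
          braket (col V 0) (spherical_tensor n k q) (col V 1) = 0)"
    proof (intro conjI allI impI)
      fix k :: nat and q :: int
      assume "k < d" "k \<le> n" "odd k" "0 \<le> q" "q \<le> int k" "q mod (2 * int b) = 0"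
      moreover then have "\<bar>q\<bar> \<le> int k" by simp
      ultimately show "braket (col V 0) (spherical_tensor n k q) (col V 0) = braket (col V 1) (spherical_tensor n k q) (col V 1)"
        using H by blast
    next
      fix k :: nat and q :: int
      assume "k < d" "k \<le> n" "odd k" "- int k \<le> q" "q \<le> int k" "q mod (2 * int b) = (2 * int a - 1) mod (2 * int b)"
      moreover then have "\<bar>q\<bar> \<le> int k" by (simp add: abs_le_iff)
      ultimately show "braket (col V 0) (spherical_tensor n k q) (col V 1) = 0"
        using H by blast
    qed
  next
    assume C: "(\<forall>k q. k < d \<longrightarrow> k \<le> n \<longrightarrow> odd k \<longrightarrow> 0 \<le> q \<longrightarrow> q \<le> int k
          \<longrightarrow> q mod (2 * int b) = 0 \<longrightarrow>
          braket (col V 0) (spherical_tensor n k q) (col V 0)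
            = braket (col V 1) (spherical_tensor n k q) (col V 1))
      \<and>
      (\<forall>k q. k < d \<longrightarrow> k \<le> n \<longrightarrow> odd k \<longrightarrow> - int k \<le> q \<longrightarrow> q \<le> int k
          \<longrightarrow> q mod (2 * int b) = (2 * int a - 1) mod (2 * int b) \<longrightarrow>
          braket (col V 0) (spherical_tensor n k q) (col V 1) = 0)"
    have Ci: "GG n k q x x = GG n k q y y" if "k < d" "k \<le> n" "odd k" "0 \<le> q" "q \<le> int k" "q mod (2 * int b) = 0" for k q
      using C that B00 B11 by metis
    have Cii: "GG n k q x y = 0" if "k < d" "k \<le> n" "odd k" "- int k \<le> q" "q \<le> int k"
        "q mod (2 * int b) = (2 * int a - 1) mod (2 * int b)" for k q
      using C that B01 by metis
    have OFF: "GG n k q x y = 0" if k: "k < d" "k \<le> n" and q: "\<bar>q\<bar> \<le> int k" for k q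
    proof (rule ccontr)
      assume nz: "GG n k q x y \<noteq> 0"
      have dv: "(2 * int b) dvd (q - (2 * int a - 1))" using Sxy[OF nz] .
      then have qm: "q mod (2 * int b) = (2 * int a - 1) mod (2 * int b)" by (simp add: mod_eq_dvd_iff)
      have "(2::int) dvd (2 * int b)" by simp
      then have "(2::int) dvd (q - (2 * int a - 1))" using dv dvd_trans by blast
      then have oq: "odd q" by presburger
      show False
      proof (cases "even k")
        case True
        then have "GG n k q x y = - GG n k q x y" using R2[of k q] oq unfolding sg_def by simp
        then show False using nz by simp
      next
        case False
        then show False using Cii[OF k False _ _ qm] q nz by (auto simp: abs_le_iff)
      qed
    qed
    have DIAG: "GG n k q y y = GG n k q x x" if k: "k < d" "k \<le> n" and q: "\<bar>q\<bar> \<le> int k" for k q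
    proof (cases "GG n k q x x = 0 \<and> GG n k q y y = 0")
      case True
      then show ?thesis by simp
    next
      case False
      then have dv: "(2 * int b) dvd q" using Sxx Syy by blast
      have "(2::int) dvd (2 * int b)" by simp
      then have eq: "even q" using dv dvd_trans by blast
      then have sq: "sg q = 1" unfolding sg_def by simp
      show ?thesis
      proof (cases "even k")
        case True
        then show ?thesis using R1[of k q] sq by simp
      next
        case odd: False
        show ?thesis
        proof (cases "0 \<le> q")
          case True
          have "q mod (2 * int b) = 0" using dv by simp
          then show ?thesis using Ci[OF k odd True] q True by auto
        next
          case False
          have "(- q) mod (2 * int b) = 0" using dv by simp
          then have "GG n k (-q) x x = GG n k (-q) y y" using Ci[OF k odd] q False by auto
          then show ?thesis using R4x[of k q] R4y[of k q] sq by simp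
        qed
      qed
    qed
    show "\<forall>k q. k < d \<longrightarrow> k \<le> n \<longrightarrow> \<bar>q\<bar> \<le> int k \<longrightarrow> spin_KL n V k q"
    proof (intro allI impI)
      fix k q assume k: "k < d" "k \<le> n" and q: "\<bar>q\<bar> \<le> int k"
      have q': "\<bar>- q\<bar> \<le> int k" using q by simp
      have e01: "GG n k q x y = 0" using OFF[OF k q] .
      have e10: "GG n k q y x = 0" using R3[of k q] OFF[OF k q'] by simp
      have e11: "GG n k q y y = GG n k q x x" using DIAG[OF k q] .
      show "spin_KL n V k q" unfolding spin_KL_def
      proof (intro exI[of _ "GG n k q x x"] allI impI)
        fix u v :: nat assume u: "u < 2" and v: "v < 2"
        then have "u = 0 \<or> u = 1" "v = 0 \<or> v = 1" by auto
        then show "braket (col V u) (spherical_tensor n k q) (col V v) = (if u = v then GG n k q x x else 0)"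
          using B00 B01 B10 B11 e01 e10 e11 by auto
      qed
    qed
  qed
qed


end
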